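(* Assume Assumption 1, Assumption 2 and the null hypothesis $H_0:\ T_i(1)=T_i(0)$ for all $i$, and condition on $\boldsymbol{T}(1),\boldsymbol{T}(0)$. Then for each $1\le k\le K$, $$\mathbb{E}\Big(\frac{\mathbb{1}(V_k>0)}{V_k}\ \Big|\ \boldsymbol{T}(1),\boldsymbol{T}(0)\Big)\le\frac{16}{g_k\phi_k(1-\phi_k)}\cdot\frac{1+2n_k^{-1}}{(h_k+n_k^{-1})(1-h_k+n_k^{-1})}\cdot\frac{1}{n_k}.$$
   Context: There are $n$ units. Unit $i$ has potential event times $T_i(1),T_i(0)\ge 0$, potential censoring times $C_i(1),C_i(0)\in[0,\infty]$, and treatment indicator $Z_i\in\{0,1\}$; bold letters denote $n$-vectors. Assumption 1: conditional on $\boldsymbol{T}(1),\boldsymbol{T}(0),\boldsymbol{C}(1),\boldsymbol{C}(0)$, the $Z_i$ are i.i.d. Bernoulli$(p_1)$, $p_1=1-p_0\in(0,1)$. Assumption 2: $(\boldsymbol{C}(1),\boldsymbol{C}(0))$ is independent of $(\boldsymbol{T}(1),\boldsymbol{T}(0))$ and the pairs $(C_i(1),C_i(0))$ are i.i.d. across $i$. $G_z(c)=\Pr(C_i(z)\ge c)$, $G(t)=p_1G_1(t)+p_0G_0(t)$. Realized: $W_i=\min\{T_i,C_i\}$, $\Delta_i=\mathbb{1}(T_i\le C_i)$ with $T_i=Z_iT_i(1)+(1-Z_i)T_i(0)$, $C_i=Z_iC_i(1)+(1-Z_i)C_i(0)$. Let $t_1<\dots<t_K$ be the distinct values of $\{T_i(0)\}$,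 $d_k=\#\{i:T_i(0)=t_k\}$, $n_k=\#\{i:T_i(0)\ge t_k\}$, $h_k=d_k/n_k$, $g_k=G(t_k)$, $\phi_k=p_1G_1(t_k)/G(t_k)$; $N_{1k},N_{0k}$ the numbers of treated / control units with $W_i\ge t_k$, $N_k=N_{1k}+N_{0k}$, $D_k=\sum_i\Delta_i\mathbb{1}(W_i=t_k)$, $V_k=D_k(N_k-D_k)N_{1k}N_{0k}/\{N_k^2(N_k-1)\}$ (convention $0/0:=0$). *)

theory Defs
  imports "HOL-Probability.Probability"
begin

text \<open>A sample point: for each unit i, (Z_i, (C_i(1), C_i(0))).
  Censoring times live in [0,\<infinity>], rendered as ennreal.\<close>
type_synonym sample = "nat \<Rightarrow> bool \<times> (ennreal \<times> ennreal)"

text \<open>Probability space conditional on T(1),T(0): the pairs (Z_i,(C_i(1),C_i(0)))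
  are i.i.d., Z_i ~ Bernoulli(p1) independent of the censoring pair with law mu.\<close>
definition unit_space :: "real \<Rightarrow> (ennreal \<times> ennreal) measure \<Rightarrow> (bool \<times> (ennreal \<times> ennreal)) measure" where
  "unit_space p1 \<mu> = measure_pmf (bernoulli_pmf p1) \<Otimes>\<^sub>M \<mu>"

definition sample_space :: "nat \<Rightarrow> real \<Rightarrow> (ennreal \<times> ennreal) measure \<Rightarrow> sample measure" where
  "sample_space n p1 \<mu> = PiM {..<n} (\<lambda>_. unit_space p1 \<mu>)"

definition Zr :: "sample \<Rightarrow> nat \<Rightarrow> bool" where
  "Zr \<omega> i = fst (\<omega> i)"

definition Cr :: "sample \<Rightarrow> nat \<Rightarrow> ennreal" where
  "Cr \<omega> i = (if Zr \<omega> i then fst (snd (\<omega> i)) else snd (snd (\<omega> i)))"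

definition Tr :: "(nat \<Rightarrow> real) \<Rightarrow> (nat \<Rightarrow> real) \<Rightarrow> sample \<Rightarrow> nat \<Rightarrow> real" where
  "Tr T1 T0 \<omega> i = (if Zr \<omega> i then T1 i else T0 i)"

definition Wr :: "(nat \<Rightarrow> real) \<Rightarrow> (nat \<Rightarrow> real) \<Rightarrow> sample \<Rightarrow> nat \<Rightarrow> ennreal" where
  "Wr T1 T0 \<omega> i = min (ennreal (Tr T1 T0 \<omega> i)) (Cr \<omega> i)"

definition Deltar :: "(nat \<Rightarrow> real) \<Rightarrow> (nat \<Rightarrow> real) \<Rightarrow> sample \<Rightarrow> nat \<Rightarrow> bool" where
  "Deltar T1 T0 \<omega> i = (ennreal (Tr T1 T0 \<omega> i) \<le> Cr \<omega> i)"

definition N1 :: "nat \<Rightarrow> (nat \<Rightarrow> real) \<Rightarrow> (nat \<Rightarrow> real) \<Rightarrow> real \<Rightarrow> sample \<Rightarrow> nat" where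
  "N1 n T1 T0 t \<omega> = card {i. i < n \<and> Zr \<omega> i \<and> ennreal t \<le> Wr T1 T0 \<omega> i}"

definition N0 :: "nat \<Rightarrow> (nat \<Rightarrow> real) \<Rightarrow> (nat \<Rightarrow> real) \<Rightarrow> real \<Rightarrow> sample \<Rightarrow> nat" where
  "N0 n T1 T0 t \<omega> = card {i. i < n \<and> \<not> Zr \<omega> i \<and> ennreal t \<le> Wr T1 T0 \<omega> i}"

definition Dk :: "nat \<Rightarrow> (nat \<Rightarrow> real) \<Rightarrow> (nat \<Rightarrow> real) \<Rightarrow> real \<Rightarrow> sample \<Rightarrow> nat" where
  "Dk n T1 T0 t \<omega> = card {i. i < n \<and> Deltar T1 T0 \<omega> i \<and> Wr T1 T0 \<omega> i = ennreal t}"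

text \<open>V_k; Isabelle's x/0 = 0 matches the convention 0/0 := 0.\<close>
definition Vk :: "nat \<Rightarrow> (nat \<Rightarrow> real) \<Rightarrow> (nat \<Rightarrow> real) \<Rightarrow> real \<Rightarrow> sample \<Rightarrow> real" where
  "Vk n T1 T0 t \<omega> =
     (let D = real (Dk n T1 T0 t \<omega>); a = real (N1 n T1 T0 t \<omega>); b = real (N0 n T1 T0 t \<omega>);
          N = a + b
      in D * (N - D) * a * b / (N\<^sup>2 * (N - 1)))"

definition G1 :: "(ennreal \<times> ennreal) measure \<Rightarrow> real \<Rightarrow> real" where
  "G1 \<mu> c = measure \<mu> {x \<in> space \<mu>. ennreal c \<le> fst x}"

definition G0 :: "(ennreal \<times> ennreal) measure \<Rightarrow> real \<Rightarrow> real" where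
  "G0 \<mu> c = measure \<mu> {x \<in> space \<mu>. ennreal c \<le> snd x}"

definition Gmix :: "real \<Rightarrow> (ennreal \<times> ennreal) measure \<Rightarrow> real \<Rightarrow> real" where
  "Gmix p1 \<mu> c = p1 * G1 \<mu> c + (1 - p1) * G0 \<mu> c"

definition phik :: "real \<Rightarrow> (ennreal \<times> ennreal) measure \<Rightarrow> real \<Rightarrow> real" where
  "phik p1 \<mu> c = p1 * G1 \<mu> c / Gmix p1 \<mu> c"

definition dk :: "nat \<Rightarrow> (nat \<Rightarrow> real) \<Rightarrow> real \<Rightarrow> nat" where
  "dk n T0 t = card {i. i < n \<and> T0 i = t}"

definition nk :: "nat \<Rightarrow> (nat \<Rightarrow> real) \<Rightarrow> real \<Rightarrow> nat" where
  "nk n T0 t = card {i. i < n \<and> t \<le> T0 i}"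

definition hk :: "nat \<Rightarrow> (nat \<Rightarrow> real) \<Rightarrow> real \<Rightarrow> real" where
  "hk n T0 t = real (dk n T0 t) / real (nk n T0 t)"

end

theory Submission
  imports Defs
begin

lemma binom_inv:
  assumes p: "0 < p" "p \<le> 1"
  shows "measure_pmf.expectation (binomial_pmf N p) (\<lambda>k. 1 / (real k + 1)) \<le> 1 / ((real N + 1) * p)"
proof -
  have E: "measure_pmf.expectation (binomial_pmf N p) (\<lambda>k. 1 / (real k + 1))
      = (\<Sum>k\<le>N. pmf (binomial_pmf N p) k * (1 / (real k + 1)))"
  proof (subst integral_measure_pmf[where A="{..N}"])
    fix a assume "a \<in> set_pmf (binomial_pmf N p)" "1 / (real a + 1) \<noteq> 0"
    then show "a \<in> {..N}" using p by (auto simp: set_pmf_eq)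
  qed auto
  have T: "pmf (binomial_pmf N p) k * (1 / (real k + 1))
      = real (Suc N choose Suc k) * p ^ Suc k * (1 - p) ^ (Suc N - Suc k) / ((real N + 1) * p)" for k
  proof -
    obtain c where c: "c = real (Suc N choose Suc k)" by simp
    have "real (Suc N) * real (N choose k) = c * real (Suc k)"
      unfolding c by (metis Suc_times_binomial_eq of_nat_mult)
    then have h: "real (N choose k) / (real k + 1) = c / (real N + 1)"
      by (simp add: field_simps)
    have "pmf (binomial_pmf N p) k * (1 / (real k + 1))
        = (real (N choose k) / (real k + 1)) * p ^ k * (1 - p) ^ (N - k)"
      using p by simp
    also have "\<dots> = c * p ^ Suc k * (1 - p) ^ (Suc N - Suc k) / ((real N + 1) * p)"
    proof -
      have "p + p * real N > 0" using p by (simp add: add_pos_nonneg)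
      then show ?thesis unfolding h using p by (simp add: field_simps)
    qed
    finally show ?thesis unfolding c .
  qed
  have "(\<Sum>k\<le>N. real (Suc N choose Suc k) * p ^ Suc k * (1 - p) ^ (Suc N - Suc k))
       \<le> (\<Sum>k\<le>Suc N. real (Suc N choose k) * p ^ k * (1 - p) ^ (Suc N - k))"
    using p by (subst sum.atMost_Suc_shift) simp
  also have "\<dots> = (p + (1 - p)) ^ Suc N" by (subst binomial_ring) simp
  also have "\<dots> = 1" by simp
  finally have S: "(\<Sum>k\<le>N. real (Suc N choose Suc k) * p ^ Suc k * (1 - p) ^ (Suc N - Suc k)) \<le> 1" .
  have "measure_pmf.expectation (binomial_pmf N p) (\<lambda>k. 1 / (real k + 1))
     = (\<Sum>k\<le>N. real (Suc N choose Suc k) * p ^ Suc k * (1 - p) ^ (Suc N - Suc k)) / ((real N + 1) * p)"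
    unfolding E T by (simp add: sum_divide_distrib)
  also have "\<dots> \<le> 1 / ((real N + 1) * p)"
    using S p by (intro divide_right_mono) auto
  finally show ?thesis .
qed

lemma pi_count_binomial:
  assumes "finite I" "S \<subseteq> I" "p \<in> {0..1}"
  shows "map_pmf (\<lambda>f. card {i\<in>S. f i}) (Pi_pmf I dflt (\<lambda>_. bernoulli_pmf p)) = binomial_pmf (card S) p"
proof -
  have fS: "finite S" using assms finite_subset by blast
  have "binomial_pmf (card S) p = map_pmf (\<lambda>f. card {x\<in>S. f x}) (Pi_pmf S dflt (\<lambda>_. bernoulli_pmf p))"
    using binomial_pmf_altdef'[OF fS refl assms(3)] .
  also have "Pi_pmf S dflt (\<lambda>_. bernoulli_pmf p) = map_pmf (\<lambda>f x. if x \<in> S then f x else dflt) (Pi_pmf I dflt (\<lambda>_. bernoulli_pmf p))"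
    using Pi_pmf_subset[OF assms(1,2)] .
  also have "map_pmf (\<lambda>f. card {x\<in>S. f x}) \<dots> = map_pmf (\<lambda>f. card {i\<in>S. f i}) (Pi_pmf I dflt (\<lambda>_. bernoulli_pmf p))"
    by (simp add: map_pmf_comp cong: conj_cong)
  finally show ?thesis by simp
qed

lemma pi_inv:
  assumes "finite I" "S \<subseteq> I" "0 < p" "p \<le> 1"
  shows "measure_pmf.expectation (Pi_pmf I dflt (\<lambda>_. bernoulli_pmf p)) (\<lambda>f. 1 / (real (card {i\<in>S. f i}) + 1))
      \<le> 1 / ((real (card S) + 1) * p)"
proof -
  have "measure_pmf.expectation (Pi_pmf I dflt (\<lambda>_. bernoulli_pmf p)) (\<lambda>f. 1 / (real (card {i\<in>S. f i}) + 1))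
     = measure_pmf.expectation (map_pmf (\<lambda>f. card {i\<in>S. f i}) (Pi_pmf I dflt (\<lambda>_. bernoulli_pmf p))) (\<lambda>k. 1 / (real k + 1))"
    by simp
  also have "\<dots> = measure_pmf.expectation (binomial_pmf (card S) p) (\<lambda>k. 1 / (real k + 1))"
    using assms by (subst pi_count_binomial) auto
  also have "\<dots> \<le> 1 / ((real (card S) + 1) * p)" using binom_inv assms by blast
  finally show ?thesis .
qed

lemma map_not_bernoulli:
  assumes "p \<in> {0..1}"
  shows "map_pmf Not (bernoulli_pmf (1 - p)) = bernoulli_pmf p"
proof (rule pmf_eqI)
  fix b :: bool
  have "pmf (map_pmf Not (bernoulli_pmf (1 - p))) (Not (Not b)) = pmf (bernoulli_pmf (1 - p)) (Not b)"
    by (rule pmf_map_inj') (simp add: inj_def)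
  then show "pmf (map_pmf Not (bernoulli_pmf (1 - p))) b = pmf (bernoulli_pmf p) b"
    using assms by (cases b) auto
qed

lemma pi_inv_neg:
  assumes "finite I" "S \<subseteq> I" "0 \<le> p" "p < 1"
  shows "measure_pmf.expectation (Pi_pmf I dflt (\<lambda>_. bernoulli_pmf p)) (\<lambda>f. 1 / (real (card {i\<in>S. \<not> f i}) + 1))
      \<le> 1 / ((real (card S) + 1) * (1 - p))"
proof -
  have "Pi_pmf I dflt (\<lambda>_. bernoulli_pmf p) = Pi_pmf I dflt (\<lambda>_. map_pmf Not (bernoulli_pmf (1 - p)))"
    using assms by (simp add: map_not_bernoulli)
  also have "\<dots> = map_pmf (\<lambda>h. Not \<circ> h) (Pi_pmf I (\<not> dflt) (\<lambda>_. bernoulli_pmf (1 - p)))"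
    using assms by (intro Pi_pmf_map) auto
  finally have e: "Pi_pmf I dflt (\<lambda>_. bernoulli_pmf p) = \<dots>" .
  have "measure_pmf.expectation (Pi_pmf I dflt (\<lambda>_. bernoulli_pmf p)) (\<lambda>f. 1 / (real (card {i\<in>S. \<not> f i}) + 1))
     = measure_pmf.expectation (Pi_pmf I (\<not> dflt) (\<lambda>_. bernoulli_pmf (1 - p))) (\<lambda>f. 1 / (real (card {i\<in>S. f i}) + 1))"
    unfolding e by simp
  also have "\<dots> \<le> 1 / ((real (card S) + 1) * (1 - p))"
    using assms by (intro pi_inv) auto
  finally show ?thesis .
qed

lemma key_ineq:
  fixes D M a b :: real
  assumes "D \<ge> 1" "M \<ge> 1" "a \<ge> 1" "b \<ge> 1" "D + M = a + b"
  shows "(a+b)^2*(a+b-1)/(D*M*a*b) \<le> (2/(D+1)+2/(M+1)) * ((a+b+1)*(2/(a+1)+2/(b+1)))"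
proof -
  have i1: "1/x \<le> 2/(x+1)" if "x \<ge> 1" for x :: real using that by (simp add: field_simps)
  have e1: "(a+b)/(D*M) = 1/D + 1/M" using assms by (simp add: field_simps)
  have h1: "(a+b)/(D*M) \<le> 2/(D+1)+2/(M+1)" unfolding e1 using i1 assms by (intro add_mono) auto
  have e2: "(a+b)^2/(a*b) = (a+b)*(1/a+1/b)" using assms by (simp add: field_simps power2_eq_square)
  have "(a+b)*(a+b-1)/(a*b) \<le> (a+b)^2/(a*b)"
    using assms by (intro divide_right_mono) (auto simp: power2_eq_square)
  also have "\<dots> \<le> (a+b+1)*(2/(a+1)+2/(b+1))"
  proof -
    have "1/a+1/b \<le> 2/(a+1)+2/(b+1)" using i1 assms by (intro add_mono) auto
    moreover have "(a+b) \<le> a+b+1" by simp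
    ultimately show ?thesis unfolding e2 using assms
      by (intro mult_mono) (auto intro!: add_nonneg_nonneg)
  qed
  finally have h2: "(a+b)*(a+b-1)/(a*b) \<le> (a+b+1)*(2/(a+1)+2/(b+1))" .
  have "(a+b)^2*(a+b-1)/(D*M*a*b) = ((a+b)/(D*M)) * ((a+b)*(a+b-1)/(a*b))"
    using assms by (simp add: field_simps power2_eq_square)
  also have "\<dots> \<le> (2/(D+1)+2/(M+1)) * ((a+b+1)*(2/(a+1)+2/(b+1)))"
    using h1 h2 assms by (intro mult_mono) auto
  finally show ?thesis .
qed

definition st :: "bool \<Rightarrow> bool \<Rightarrow> nat" where
  "st r z = (if r then (if z then 0 else 1) else 2)"

definition Vf :: "nat set \<Rightarrow> nat set \<Rightarrow> (nat \<Rightarrow> nat) \<Rightarrow> real" where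
  "Vf A K x = (let D = real (card {i\<in>A. x i \<noteq> 2}); a = real (card {i\<in>K. x i = 0});
      b = real (card {i\<in>K. x i = 1}); N = a + b in D * (N - D) * a * b / (N\<^sup>2 * (N - 1)))"

definition Fv :: "nat set \<Rightarrow> nat set \<Rightarrow> (nat \<Rightarrow> nat) \<Rightarrow> real" where
  "Fv A K x = (if Vf A K x > 0 then 1 / Vf A K x else 0)"

definition Pb :: "nat set \<Rightarrow> nat set \<Rightarrow> (nat \<Rightarrow> bool) \<Rightarrow> real" where
  "Pb A K R = 2 / (real (card {i\<in>A. R i}) + 1) + 2 / (real (card {i\<in>K - A. R i}) + 1)"

definition Qb :: "nat set \<Rightarrow> (nat \<Rightarrow> bool) \<Rightarrow> (nat \<Rightarrow> bool) \<Rightarrow> real" where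
  "Qb K R Z = (real (card {i\<in>K. R i}) + 1) *
     (2 / (real (card {i\<in>{i\<in>K. R i}. Z i}) + 1) + 2 / (real (card {i\<in>{i\<in>K. R i}. \<not> Z i}) + 1))"

lemma Fv_nonneg: "Fv A K x \<ge> 0" by (simp add: Fv_def)

lemma pointwise:
  assumes "finite K" "A \<subseteq> K" "K \<subseteq> I"
  shows "Fv A K (\<lambda>i. if i \<in> I then st (R i) (Z i) else 2) \<le> Pb A K R * Qb K R Z"
proof -
  let ?x = "\<lambda>i. if i \<in> I then st (R i) (Z i) else 2"
  define S where "S = {i\<in>K. R i}"
  have fA: "finite A" using assms finite_subset by blast
  have s1: "{i\<in>A. ?x i \<noteq> 2} = {i\<in>A. R i}" using assms by (auto simp: st_def)
  have s2: "{i\<in>K. ?x i = 0} = {i\<in>S. Z i}" using assms by (auto simp: st_def S_def)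
  have s3: "{i\<in>K. ?x i = 1} = {i\<in>S. \<not> Z i}" using assms by (auto simp: st_def S_def)
  have fS: "finite S" using assms by (simp add: S_def)
  have c1: "card {i\<in>S. Z i} + card {i\<in>S. \<not> Z i} = card S"
    using fS by (subst card_Un_disjoint[symmetric]) (auto intro: arg_cong[where f=card])
  have c2: "card {i\<in>A. R i} + card {i\<in>K - A. R i} = card S"
    unfolding S_def using assms fA by (subst card_Un_disjoint[symmetric]) (auto intro: arg_cong[where f=card])
  define D where "D = real (card {i\<in>A. R i})"
  define M where "M = real (card {i\<in>K - A. R i})"
  define a where "a = real (card {i\<in>S. Z i})"
  define b where "b = real (card {i\<in>S. \<not> Z i})"
  have "D + M = real (card {i\<in>A. R i} + card {i\<in>K - A. R i})" by (simp add: D_def M_def)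
  also have "\<dots> = real (card {i\<in>S. Z i} + card {i\<in>S. \<not> Z i})" using c1 c2 by simp
  also have "\<dots> = a + b" by (simp add: a_def b_def)
  finally have DM: "D + M = a + b" .
  have V: "Vf A K ?x = D * M * a * b / ((a+b)\<^sup>2 * (a + b - 1))"
  proof -
    have "a + b - D = M" using DM by simp
    then show ?thesis
      unfolding Vf_def Let_def s1 s2 s3 D_def[symmetric] a_def[symmetric] b_def[symmetric]
      by simp
  qed
  have PQ: "Pb A K R * Qb K R Z = (2/(D+1)+2/(M+1)) * ((a+b+1)*(2/(a+1)+2/(b+1)))"
  proof -
    have "real (card S) = real (card {i\<in>S. Z i} + card {i\<in>S. \<not> Z i})" using c1 by simp
    then have cs: "real (card S) = a + b" unfolding a_def b_def by simp
    show ?thesis unfolding Pb_def Qb_def S_def[symmetric] cs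
      by (simp add: D_def M_def a_def b_def)
  qed
  have nn: "0 \<le> D" "0 \<le> M" "0 \<le> a" "0 \<le> b" unfolding D_def M_def a_def b_def by auto
  show ?thesis
  proof (cases "Vf A K ?x > 0")
    case False
    then have "Fv A K ?x = 0" by (simp add: Fv_def)
    then show ?thesis unfolding PQ using nn by (simp add: add_nonneg_nonneg)
  next
    case True
    have nz: "D \<noteq> 0" "M \<noteq> 0" "a \<noteq> 0" "b \<noteq> 0"
      using True unfolding V by (auto simp del: of_nat_eq_0_iff)
    have ge: "D \<ge> 1" "M \<ge> 1" "a \<ge> 1" "b \<ge> 1" using nz unfolding D_def M_def a_def b_def by auto
    have "Fv A K ?x = (a+b)^2*(a+b-1)/(D*M*a*b)"
      using True unfolding Fv_def V by simp
    also have "\<dots> \<le> Pb A K R * Qb K R Z" unfolding PQ by (rule key_ineq[OF ge DM])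
    finally show ?thesis .
  qed
qed

lemma fin_Pi_bern: "finite I \<Longrightarrow> finite (set_pmf (Pi_pmf I d (\<lambda>_. bernoulli_pmf p)))"
  by (rule finite_subset[OF set_Pi_pmf_subset']) (auto intro!: finite_PiE_dflt)

lemma int_Pi_bern: "finite I \<Longrightarrow> integrable (measure_pmf (Pi_pmf I d (\<lambda>_. bernoulli_pmf p))) (f :: _ \<Rightarrow> real)"
  by (rule integrable_measure_pmf_finite[OF fin_Pi_bern])

lemma int_c_div: "measure_pmf.expectation M (\<lambda>x. 2 / (f x :: real)) = 2 * measure_pmf.expectation M (\<lambda>x. 1 / f x)"
  by (subst integral_mult_right_zero[symmetric]) simp

lemma aux_cancel: "x \<noteq> 0 \<Longrightarrow> x * (c * (1 / (x * y))) = c / (y::real)"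
  by (cases "y = 0") (simp_all add: field_simps)

lemma Qb_nonneg: "Qb K R Z \<ge> 0" by (simp add: Qb_def)
lemma Pb_nonneg: "Pb A K R \<ge> 0" by (simp add: Pb_def)

lemma EQ:
  assumes "finite I" "K \<subseteq> I" "0 < \<phi>" "\<phi> < 1"
  shows "measure_pmf.expectation (Pi_pmf I False (\<lambda>_. bernoulli_pmf \<phi>)) (Qb K R) \<le> 2/\<phi> + 2/(1-\<phi>)"
proof -
  let ?M = "Pi_pmf I False (\<lambda>_. bernoulli_pmf \<phi>)"
  define S where "S = {i\<in>K. R i}"
  have SI: "S \<subseteq> I" using assms by (auto simp: S_def)
  define N where "N = real (card S)"
  have int: "integrable ?M f" for f :: "_ \<Rightarrow> real" using int_Pi_bern[OF assms(1)] .
  have "measure_pmf.expectation ?M (Qb K R) =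
     (N + 1) * (2 * measure_pmf.expectation ?M (\<lambda>Z. 1 / (real (card {i\<in>S. Z i}) + 1))
              + 2 * measure_pmf.expectation ?M (\<lambda>Z. 1 / (real (card {i\<in>S. \<not> Z i}) + 1)))"
    unfolding Qb_def S_def[symmetric] N_def[symmetric]
    by (simp add: int int_c_div)
  also have "\<dots> \<le> (N + 1) * (2 * (1 / ((N + 1) * \<phi>)) + 2 * (1 / ((N + 1) * (1 - \<phi>))))"
    unfolding N_def using assms SI
    by (intro mult_left_mono add_mono pi_inv pi_inv_neg) auto
  also have "\<dots> = 2/\<phi> + 2/(1-\<phi>)"
  proof -
    have hN: "N + 1 > 0" by (simp add: N_def add_nonneg_pos)
    have "(N + 1) * (2 * (1 / ((N + 1) * \<phi>))) = 2 / \<phi>"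
      using hN by (intro aux_cancel) auto
    moreover have "(N + 1) * (2 * (1 / ((N + 1) * (1 - \<phi>)))) = 2 / (1 - \<phi>)"
      using hN by (intro aux_cancel) auto
    ultimately show ?thesis by (simp only: distrib_left)
  qed
  finally show ?thesis .
qed

lemma EP:
  assumes "finite I" "K \<subseteq> I" "A \<subseteq> K" "0 < g" "g \<le> 1"
  shows "measure_pmf.expectation (Pi_pmf I False (\<lambda>_. bernoulli_pmf g)) (Pb A K)
     \<le> 2 / ((real (card A) + 1) * g) + 2 / ((real (card (K - A)) + 1) * g)"
proof -
  let ?M = "Pi_pmf I False (\<lambda>_. bernoulli_pmf g)"
  have int: "integrable ?M f" for f :: "_ \<Rightarrow> real" using int_Pi_bern[OF assms(1)] .
  have "measure_pmf.expectation ?M (Pb A K) =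
      2 * measure_pmf.expectation ?M (\<lambda>R. 1 / (real (card {i\<in>A. R i}) + 1))
    + 2 * measure_pmf.expectation ?M (\<lambda>R. 1 / (real (card {i\<in>K - A. R i}) + 1))"
    unfolding Pb_def by (simp add: int int_c_div)
  also have "\<dots> \<le> 2 * (1 / ((real (card A) + 1) * g)) + 2 * (1 / ((real (card (K - A)) + 1) * g))"
    using assms by (intro add_mono mult_left_mono pi_inv) auto
  finally show ?thesis by simp
qed

definition qpmf :: "real \<Rightarrow> real \<Rightarrow> nat pmf" where
  "qpmf g \<phi> = bernoulli_pmf g \<bind> (\<lambda>r. bernoulli_pmf \<phi> \<bind> (\<lambda>z. return_pmf (st r z)))"

lemma Pi_qpmf:
  assumes "finite I"
  shows "Pi_pmf I 2 (\<lambda>_. qpmf g \<phi>) =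
    Pi_pmf I False (\<lambda>_. bernoulli_pmf g) \<bind> (\<lambda>R. Pi_pmf I False (\<lambda>_. bernoulli_pmf \<phi>) \<bind>
       (\<lambda>Z. return_pmf (\<lambda>i. if i \<in> I then st (R i) (Z i) else 2)))"
proof -
  have "Pi_pmf I 2 (\<lambda>_. qpmf g \<phi>) = Pi_pmf I False (\<lambda>_. bernoulli_pmf g) \<bind>
      (\<lambda>R. Pi_pmf I 2 (\<lambda>i. bernoulli_pmf \<phi> \<bind> (\<lambda>z. return_pmf (st (R i) z))))"
    unfolding qpmf_def using assms by (rule Pi_pmf_bind)
  also have "\<dots> = Pi_pmf I False (\<lambda>_. bernoulli_pmf g) \<bind> (\<lambda>R. Pi_pmf I False (\<lambda>_. bernoulli_pmf \<phi>) \<bind>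
       (\<lambda>Z. Pi_pmf I 2 (\<lambda>i. return_pmf (st (R i) (Z i)))))"
    using assms by (intro bind_pmf_cong refl Pi_pmf_bind)
  also have "\<dots> = Pi_pmf I False (\<lambda>_. bernoulli_pmf g) \<bind> (\<lambda>R. Pi_pmf I False (\<lambda>_. bernoulli_pmf \<phi>) \<bind>
       (\<lambda>Z. return_pmf (\<lambda>i. if i \<in> I then st (R i) (Z i) else 2)))"
    using assms by simp
  finally show ?thesis .
qed

lemma core:
  assumes "finite I" "K \<subseteq> I" "A \<subseteq> K" "0 < g" "g \<le> 1" "0 < \<phi>" "\<phi> < 1"
  shows "(\<integral>\<^sup>+x. ennreal (Fv A K x) \<partial>Pi_pmf I 2 (\<lambda>_. qpmf g \<phi>))
    \<le> ennreal ((2/\<phi> + 2/(1-\<phi>)) * (2 / ((real (card A) + 1) * g) + 2 / ((real (card (K - A)) + 1) * g)))"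
proof -
  let ?MR = "Pi_pmf I False (\<lambda>_. bernoulli_pmf g)"
  let ?MZ = "Pi_pmf I False (\<lambda>_. bernoulli_pmf \<phi>)"
  define C where "C = 2/\<phi> + 2/(1-\<phi>)"
  have fK: "finite K" using assms finite_subset by blast
  have inner: "(\<integral>\<^sup>+Z. ennreal (Fv A K (\<lambda>i. if i \<in> I then st (R i) (Z i) else 2)) \<partial>?MZ)
      \<le> ennreal (Pb A K R * C)" for R
  proof -
    have "(\<integral>\<^sup>+Z. ennreal (Fv A K (\<lambda>i. if i \<in> I then st (R i) (Z i) else 2)) \<partial>?MZ)
        \<le> (\<integral>\<^sup>+Z. ennreal (Pb A K R * Qb K R Z) \<partial>?MZ)"
      using pointwise[OF fK assms(3,2)] by (intro nn_integral_mono ennreal_leI) auto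
    also have "\<dots> = ennreal (measure_pmf.expectation ?MZ (\<lambda>Z. Pb A K R * Qb K R Z))"
      using assms by (intro nn_integral_eq_integral int_Pi_bern AE_I2 mult_nonneg_nonneg Pb_nonneg Qb_nonneg)
    also have "\<dots> = ennreal (Pb A K R * measure_pmf.expectation ?MZ (Qb K R))" by simp
    also have "\<dots> \<le> ennreal (Pb A K R * C)"
      unfolding C_def using assms by (intro ennreal_leI mult_left_mono EQ Pb_nonneg) auto
    finally show ?thesis .
  qed
  have "(\<integral>\<^sup>+x. ennreal (Fv A K x) \<partial>Pi_pmf I 2 (\<lambda>_. qpmf g \<phi>)) =
     (\<integral>\<^sup>+R. (\<integral>\<^sup>+Z. ennreal (Fv A K (\<lambda>i. if i \<in> I then st (R i) (Z i) else 2)) \<partial>?MZ) \<partial>?MR)"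
    unfolding Pi_qpmf[OF assms(1)] by (simp add: Fv_nonneg)
  also have "\<dots> \<le> (\<integral>\<^sup>+R. ennreal (Pb A K R * C) \<partial>?MR)"
    using inner by (intro nn_integral_mono) auto
  also have "\<dots> = ennreal (measure_pmf.expectation ?MR (\<lambda>R. Pb A K R * C))"
    using assms by (intro nn_integral_eq_integral int_Pi_bern AE_I2 mult_nonneg_nonneg Pb_nonneg)
       (auto simp: C_def)
  also have "\<dots> = ennreal (measure_pmf.expectation ?MR (Pb A K) * C)" by simp
  also have "\<dots> \<le> ennreal ((2 / ((real (card A) + 1) * g) + 2 / ((real (card (K - A)) + 1) * g)) * C)"
    using assms by (intro ennreal_leI mult_right_mono EP) (auto simp: C_def)
  finally show ?thesis by (simp add: C_def mult.commute)
qed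

definition stat :: "real \<Rightarrow> bool \<times> (ennreal \<times> ennreal) \<Rightarrow> nat" where
  "stat t u = (if fst u then (if ennreal t \<le> fst (snd u) then 0 else 2)
               else (if ennreal t \<le> snd (snd u) then 1 else 2))"

lemma closed_fst_ge: "closed {c :: ennreal \<times> ennreal. x \<le> fst c}"
  by (intro closed_Collect_le continuous_on_const continuous_on_fst continuous_on_id)

lemma closed_snd_ge: "closed {c :: ennreal \<times> ennreal. x \<le> snd c}"
  by (intro closed_Collect_le continuous_on_const continuous_on_snd continuous_on_id)

locale unitsetup =
  fixes p1 :: real and \<mu> :: "(ennreal \<times> ennreal) measure" and t :: real
  assumes p1: "0 < p1" "p1 < 1" and P: "prob_space \<mu>" and S: "sets \<mu> = sets borel"
begin

definition X0 where "X0 = ({True} \<times> {c. ennreal t \<le> fst c})"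
definition X1 where "X1 = ({False} \<times> {c. ennreal t \<le> snd c})"

lemma space_mu: "space \<mu> = UNIV"
  using sets_eq_imp_space_eq[OF S] by simp

lemma sets_U: "sets (unit_space p1 \<mu>) = sets (count_space UNIV \<Otimes>\<^sub>M borel)"
  unfolding unit_space_def by (intro sets_pair_measure_cong) (simp_all add: S)

lemma space_U: "space (unit_space p1 \<mu>) = UNIV"
  unfolding unit_space_def by (simp add: space_pair_measure space_mu)

lemma G1_in: "{c. ennreal t \<le> fst c} \<in> sets \<mu>"
  unfolding S by (rule borel_closed[OF closed_fst_ge])

lemma G0_in: "{c. ennreal t \<le> snd c} \<in> sets \<mu>"
  unfolding S by (rule borel_closed[OF closed_snd_ge])

lemma X0_in: "X0 \<in> sets (unit_space p1 \<mu>)"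
  unfolding unit_space_def X0_def using G1_in by (intro pair_measureI) auto

lemma X1_in: "X1 \<in> sets (unit_space p1 \<mu>)"
  unfolding unit_space_def X1_def using G0_in by (intro pair_measureI) auto

lemma prob_U: "prob_space (unit_space p1 \<mu>)"
  unfolding unit_space_def using P by (intro prob_space_pair measure_pmf.prob_space_axioms)

lemma G1_eq: "G1 \<mu> t = measure \<mu> {c. ennreal t \<le> fst c}"
  unfolding G1_def space_mu by simp

lemma G0_eq: "G0 \<mu> t = measure \<mu> {c. ennreal t \<le> snd c}"
  unfolding G0_def space_mu by simp

lemma meas_X0: "measure (unit_space p1 \<mu>) X0 = p1 * G1 \<mu> t"
proof -
  interpret sigma_finite_measure \<mu> using P by (simp add: prob_space_imp_sigma_finite)
  interpret prob_space \<mu> by (rule P)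
  have "emeasure (unit_space p1 \<mu>) X0 = emeasure (measure_pmf (bernoulli_pmf p1)) {True} * emeasure \<mu> {c. ennreal t \<le> fst c}"
    unfolding unit_space_def X0_def by (rule emeasure_pair_measure_Times) (auto simp: G1_in)
  also have "\<dots> = ennreal (p1 * G1 \<mu> t)"
    using p1 by (simp add: emeasure_pmf_single emeasure_eq_measure G1_eq ennreal_mult)
  finally show ?thesis unfolding measure_def using p1 by (simp add: G1_eq)
qed

lemma meas_X1: "measure (unit_space p1 \<mu>) X1 = (1 - p1) * G0 \<mu> t"
proof -
  interpret sigma_finite_measure \<mu> using P by (simp add: prob_space_imp_sigma_finite)
  interpret prob_space \<mu> by (rule P)
  have "emeasure (unit_space p1 \<mu>) X1 = emeasure (measure_pmf (bernoulli_pmf p1)) {False} * emeasure \<mu> {c. ennreal t \<le> snd c}"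
    unfolding unit_space_def X1_def by (rule emeasure_pair_measure_Times) (auto simp: G0_in)
  also have "\<dots> = ennreal ((1 - p1) * G0 \<mu> t)"
    using p1 by (simp add: emeasure_pmf_single emeasure_eq_measure G0_eq ennreal_mult)
  finally show ?thesis unfolding measure_def using p1 by (simp add: G0_eq)
qed

lemma G_bounds: "0 \<le> G1 \<mu> t" "G1 \<mu> t \<le> 1" "0 \<le> G0 \<mu> t" "G0 \<mu> t \<le> 1"
  using prob_space.prob_le_1[OF P] by (auto simp: G1_def G0_def)

lemma pre_stat: "stat t -` {k} \<inter> space (unit_space p1 \<mu>) =
   (if k = 0 then X0 else if k = 1 then X1 else if k = 2 then UNIV - (X0 \<union> X1) else {})"
proof (rule set_eqI)
  fix u :: "bool \<times> ennreal \<times> ennreal"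
  obtain z c1 c0 where u: "u = (z, c1, c0)" by (cases u) auto
  show "u \<in> stat t -` {k} \<inter> space (unit_space p1 \<mu>) \<longleftrightarrow>
    u \<in> (if k = 0 then X0 else if k = 1 then X1 else if k = 2 then UNIV - (X0 \<union> X1) else {})"
    unfolding u space_U X0_def X1_def stat_def by (cases z) auto
qed

lemma stat_meas: "stat t \<in> measurable (unit_space p1 \<mu>) (count_space UNIV)"
proof (subst measurable_count_space_eq2_countable, intro conjI ballI)
  fix k :: nat
  have "UNIV - (X0 \<union> X1) \<in> sets (unit_space p1 \<mu>)"
    using X0_in X1_in sets.compl_sets[of "X0 \<union> X1" "unit_space p1 \<mu>"] by (simp add: space_U)
  then show "stat t -` {k} \<inter> space (unit_space p1 \<mu>) \<in> sets (unit_space p1 \<mu>)"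
    unfolding pre_stat using X0_in X1_in by auto
qed auto

abbreviation "gg \<equiv> Gmix p1 \<mu> t"
abbreviation "ph \<equiv> phik p1 \<mu> t"

lemma g_ph:
  shows "0 \<le> gg" "gg \<le> 1" "0 \<le> ph" "ph \<le> 1" "gg * ph = p1 * G1 \<mu> t" "gg * (1 - ph) = (1 - p1) * G0 \<mu> t"
proof -
  define a where "a = p1 * G1 \<mu> t"
  define b where "b = (1 - p1) * G0 \<mu> t"
  have g: "gg = a + b" unfolding a_def b_def Gmix_def ..
  have f: "ph = a / (a + b)" unfolding a_def b_def phik_def Gmix_def ..
  have a0: "0 \<le> a" "0 \<le> b" unfolding a_def b_def using G_bounds p1 by auto
  have "a \<le> p1" unfolding a_def using G_bounds p1 by (intro mult_left_le) auto
  moreover have "b \<le> 1 - p1" unfolding b_def using G_bounds p1 by (intro mult_left_le) auto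
  ultimately show "0 \<le> gg" "gg \<le> 1" unfolding g using a0 by auto
  show "0 \<le> ph" unfolding f using a0 by simp
  show "ph \<le> 1" unfolding f using a0 by (cases "a + b = 0") (auto simp: divide_le_eq_1)
  have e: "(a + b) * (a / (a + b)) = a" using a0 by (cases "a + b = 0") auto
  show "gg * ph = p1 * G1 \<mu> t" unfolding g f e by (simp add: a_def)
  show "gg * (1 - ph) = (1 - p1) * G0 \<mu> t" unfolding g f using e by (simp add: algebra_simps b_def)
qed

lemma pmf_q: "pmf (qpmf gg ph) k = (if k = 0 then p1 * G1 \<mu> t else if k = 1 then (1 - p1) * G0 \<mu> t
     else if k = 2 then 1 - gg else 0)"
proof -
  have inner: "pmf (bernoulli_pmf ph \<bind> (\<lambda>z. return_pmf (st r z))) k =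
      ph * indicator {k} (st r True) + (1 - ph) * indicator {k} (st r False)" for r
    using g_ph by (simp add: pmf_bind)
  have "pmf (qpmf gg ph) k = gg * (ph * indicator {k} (st True True) + (1 - ph) * indicator {k} (st True False))
      + (1 - gg) * (ph * indicator {k} (st False True) + (1 - ph) * indicator {k} (st False False))"
    unfolding qpmf_def using g_ph by (simp add: pmf_bind inner mult.commute)
  also have "\<dots> = (if k = 0 then gg * ph else if k = 1 then gg * (1 - ph)
     else if k = 2 then 1 - gg else 0)"
    by (cases "k = 0"; cases "k = 1"; cases "k = 2") (simp_all add: st_def indicator_def)
  finally show ?thesis using g_ph by simp
qed

lemma distr_stat: "distr (unit_space p1 \<mu>) (count_space UNIV) (stat t) = measure_pmf (qpmf gg ph)"
proof (rule measure_eqI_countable[where A=UNIV])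
  fix k :: nat
  interpret U: prob_space "unit_space p1 \<mu>" by (rule prob_U)
  have "emeasure (distr (unit_space p1 \<mu>) (count_space UNIV) (stat t)) {k}
      = emeasure (unit_space p1 \<mu>) (stat t -` {k} \<inter> space (unit_space p1 \<mu>))"
    by (rule emeasure_distr[OF stat_meas]) simp
  also have "\<dots> = ennreal (measure (unit_space p1 \<mu>) (stat t -` {k} \<inter> space (unit_space p1 \<mu>)))"
    by (rule U.emeasure_eq_measure)
  also have "measure (unit_space p1 \<mu>) (stat t -` {k} \<inter> space (unit_space p1 \<mu>)) = pmf (qpmf gg ph) k"
  proof -
    have d: "X0 \<inter> X1 = {}" by (auto simp: X0_def X1_def)
    have u: "measure (unit_space p1 \<mu>) (X0 \<union> X1) = p1 * G1 \<mu> t + (1 - p1) * G0 \<mu> t"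
      using U.finite_measure_Union[OF X0_in X1_in d] meas_X0 meas_X1 by simp
    have c: "measure (unit_space p1 \<mu>) (UNIV - (X0 \<union> X1)) = 1 - gg"
      using U.prob_compl[of "X0 \<union> X1"] X0_in X1_in u by (simp add: space_U Gmix_def)
    show ?thesis unfolding pre_stat pmf_q using meas_X0 meas_X1 c by auto
  qed
  finally show "emeasure (distr (unit_space p1 \<mu>) (count_space UNIV) (stat t)) {k} = emeasure (measure_pmf (qpmf gg ph)) {k}"
    by (simp add: emeasure_pmf_single)
qed auto

end

lemma anyF_meas:
  assumes "finite I"
  shows "(F :: (nat \<Rightarrow> nat) \<Rightarrow> real) \<in> borel_measurable (PiM I (\<lambda>_. count_space UNIV))"
proof (rule measurable_discrete_difference[where f="\<lambda>_. 0" and X="space (PiM I (\<lambda>_. count_space UNIV))"])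
  show "countable (space (PiM I (\<lambda>_. count_space (UNIV :: nat set))))"
    unfolding space_PiM using assms by (intro countable_PiE) auto
  fix x assume x: "x \<in> space (PiM I (\<lambda>_. count_space (UNIV :: nat set)))"
  then have "{x} = PiE I (\<lambda>i. {x i})"
    unfolding space_PiM by (intro PiE_singleton[symmetric]) (auto simp: PiE_def)
  also have "\<dots> \<in> sets (PiM I (\<lambda>_. count_space UNIV))"
    using assms by (intro sets_PiM_I_finite) auto
  finally show "{x} \<in> sets (PiM I (\<lambda>_. count_space UNIV))" .
qed auto

lemma Pi_pmf_distr:
  assumes "finite I" "I \<noteq> {}"
  shows "distr (measure_pmf (Pi_pmf I d (\<lambda>_. q))) (PiM I (\<lambda>_. count_space UNIV)) (\<lambda>x. restrict x I)
     = PiM I (\<lambda>_. measure_pmf q)"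
proof -
  have "distr (measure_pmf (Pi_pmf I d (\<lambda>_. q))) (PiM I (\<lambda>_. count_space UNIV)) (\<lambda>x. \<lambda>i\<in>I. x i)
     = PiM I (\<lambda>i. distr (measure_pmf (Pi_pmf I d (\<lambda>_. q))) (count_space UNIV) (\<lambda>f. f i))"
    using prob_space.indep_vars_iff_distr_eq_PiM'[OF measure_pmf.prob_space_axioms[of "Pi_pmf I d (\<lambda>_. q)"], where I=I and M'="\<lambda>_. count_space UNIV" and X="\<lambda>i f. f i"]
      indep_vars_Pi_pmf[OF assms(1), of d "\<lambda>_. q"] assms(2) by simp
  also have "\<dots> = PiM I (\<lambda>_. measure_pmf q)"
  proof (rule PiM_cong[OF refl])
    fix i assume "i \<in> I"
    then show "distr (measure_pmf (Pi_pmf I d (\<lambda>_. q))) (count_space UNIV) (\<lambda>f. f i) = measure_pmf q"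
      using assms by (simp add: map_pmf_rep_eq[symmetric] Pi_pmf_component)
  qed
  finally show ?thesis .
qed

context unitsetup
begin

lemma transfer:
  fixes F :: "(nat \<Rightarrow> nat) \<Rightarrow> real" and I :: "nat set"
  assumes I: "finite I" "I \<noteq> {}"
  assumes dep: "\<And>x y. (\<And>i. i \<in> I \<Longrightarrow> x i = y i) \<Longrightarrow> F x = F y"
  shows "(\<integral>\<omega>. F (\<lambda>i. stat t (\<omega> i)) \<partial>PiM I (\<lambda>_. unit_space p1 \<mu>))
       = measure_pmf.expectation (Pi_pmf I 2 (\<lambda>_. qpmf gg ph)) F"
proof -
  let ?C = "PiM I (\<lambda>_. count_space (UNIV :: nat set))"
  have cm: "compose I (stat t) \<in> measurable (PiM I (\<lambda>_. unit_space p1 \<mu>)) ?C"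
  proof -
    have "(\<lambda>\<omega>. stat t (\<omega> i)) \<in> measurable (PiM I (\<lambda>_. unit_space p1 \<mu>)) (count_space UNIV)" if "i \<in> I" for i
      using measurable_compose[OF measurable_component_singleton[OF that, where M="\<lambda>_. unit_space p1 \<mu>"] stat_meas]
      by simp
    then show ?thesis unfolding compose_def by (intro measurable_restrict)
  qed
  have "(\<integral>\<omega>. F (\<lambda>i. stat t (\<omega> i)) \<partial>PiM I (\<lambda>_. unit_space p1 \<mu>))
      = (\<integral>\<omega>. F (compose I (stat t) \<omega>) \<partial>PiM I (\<lambda>_. unit_space p1 \<mu>))"
    by (intro Bochner_Integration.integral_cong refl dep) (simp add: compose_def)
  also have "\<dots> = (\<integral>x. F x \<partial>distr (PiM I (\<lambda>_. unit_space p1 \<mu>)) ?C (compose I (stat t)))"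
    by (rule integral_distr[symmetric, OF cm anyF_meas[OF I(1)]])
  also have "distr (PiM I (\<lambda>_. unit_space p1 \<mu>)) ?C (compose I (stat t)) =
     distr (PiM I (\<lambda>_. unit_space p1 \<mu>)) (PiM I (\<lambda>_. measure_pmf (qpmf gg ph))) (compose I (stat t))"
    by (rule distr_cong) (auto intro!: sets_PiM_cong)
  also have "\<dots> = PiM I (\<lambda>_. distr (unit_space p1 \<mu>) (measure_pmf (qpmf gg ph)) (stat t))"
  proof (intro distr_PiM_finite_prob_space' prob_U measure_pmf.prob_space_axioms I)
    show "stat t \<in> measurable (unit_space p1 \<mu>) (measure_pmf (qpmf gg ph))"
      using stat_meas by (subst measurable_cong_sets[OF refl]) auto
  qed
  also have "\<dots> = PiM I (\<lambda>_. distr (unit_space p1 \<mu>) (count_space UNIV) (stat t))"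
    by (intro PiM_cong refl distr_cong) auto
  also have "\<dots> = PiM I (\<lambda>_. measure_pmf (qpmf gg ph))" by (simp add: distr_stat)
  also have "\<dots> = distr (measure_pmf (Pi_pmf I 2 (\<lambda>_. qpmf gg ph))) ?C (\<lambda>x. restrict x I)"
    using Pi_pmf_distr[OF I, of 2 "qpmf gg ph"] by simp
  also have "(\<integral>x. F x \<partial>\<dots>) = (\<integral>x. F (restrict x I) \<partial>measure_pmf (Pi_pmf I 2 (\<lambda>_. qpmf gg ph)))"
    by (rule integral_distr) (auto intro!: measurable_restrict simp: anyF_meas[OF I(1)] space_PiM)
  also have "\<dots> = measure_pmf.expectation (Pi_pmf I 2 (\<lambda>_. qpmf gg ph)) F"
    by (intro Bochner_Integration.integral_cong refl dep) simp
  finally show ?thesis .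
qed

end

lemma alg_rhs:
  fixes d m :: real
  assumes "0 \<le> d" "0 \<le> m" "0 < d + m"
  shows "(1 + 2 / (d + m)) / ((d / (d + m) + 1 / (d + m)) * (1 - d / (d + m) + 1 / (d + m))) * (1 / (d + m))
     = 1 / (d + 1) + 1 / (m + 1)"
proof -
  define N where "N = d + m"
  have N: "N > 0" "m = N - d" using assms by (auto simp: N_def)
  have e1: "d / N + 1 / N = (d + 1) / N" by (simp add: add_divide_distrib)
  have e2: "1 - d / N + 1 / N = (m + 1) / N" using N by (simp add: field_simps)
  have e3: "1 + 2 / N = (N + 2) / N" using N by (simp add: field_simps)
  define P where "P = (d + 1) * (m + 1)"
  have P: "P > 0" unfolding P_def using assms by simp
  have e4: "((d + 1) / N) * ((m + 1) / N) = P / (N * N)" by (simp add: P_def)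
  have e5: "((N + 2) / N) / (P / (N * N)) = (N + 2) * N / P" using N P by (simp add: field_simps)
  have e6: "(N + 2) * N / P * (1 / N) = (N + 2) / P" using N P by (simp add: field_simps)
  have "(1 + 2 / N) / ((d / N + 1 / N) * (1 - d / N + 1 / N)) * (1 / N) = (N + 2) / P"
    unfolding e1 e2 e3 e4 e5 e6 ..
  then have "(1 + 2 / N) / ((d / N + 1 / N) * (1 - d / N + 1 / N)) * (1 / N) = (N + 2) / ((d + 1) * (m + 1))"
    unfolding P_def .
  also have "\<dots> = 1 / (d + 1) + 1 / (m + 1)"
    using assms by (simp add: N_def field_simps)
  finally show ?thesis unfolding N_def .
qed

lemma Fv_dep:
  assumes "A \<subseteq> I" "K \<subseteq> I" "\<And>i. i \<in> I \<Longrightarrow> x i = y i"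
  shows "Fv A K x = Fv A K y"
proof -
  have "{i\<in>A. x i \<noteq> 2} = {i\<in>A. y i \<noteq> 2}" "{i\<in>K. x i = 0} = {i\<in>K. y i = 0}" "{i\<in>K. x i = 1} = {i\<in>K. y i = 1}"
    using assms by auto
  then show ?thesis unfolding Fv_def Vf_def by simp
qed

lemma stat_iff:
  "stat t (\<omega> i) = 0 \<longleftrightarrow> Zr \<omega> i \<and> ennreal t \<le> Cr \<omega> i"
  "stat t (\<omega> i) = 1 \<longleftrightarrow> \<not> Zr \<omega> i \<and> ennreal t \<le> Cr \<omega> i"
  "stat t (\<omega> i) \<noteq> 2 \<longleftrightarrow> ennreal t \<le> Cr \<omega> i"
  "stat t (\<omega> i) = Suc 0 \<longleftrightarrow> \<not> Zr \<omega> i \<and> ennreal t \<le> Cr \<omega> i"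
  unfolding stat_def Cr_def Zr_def by auto

lemma Vk_eq:
  assumes T0: "\<forall>i<n. 0 \<le> T0 i" and H0: "\<forall>i<n. T1 i = T0 i" and t: "0 \<le> t"
  shows "Vk n T1 T0 t \<omega> = Vf {i. i < n \<and> T0 i = t} {i. i < n \<and> t \<le> T0 i} (\<lambda>i. stat t (\<omega> i))"
proof -
  have Tr: "Tr T1 T0 \<omega> i = T0 i" if "i < n" for i using H0 that by (simp add: Tr_def)
  have W: "ennreal t \<le> Wr T1 T0 \<omega> i \<longleftrightarrow> t \<le> T0 i \<and> ennreal t \<le> Cr \<omega> i" if "i < n" for i
    using that T0 t by (simp add: Wr_def Tr)
  have s1: "{i. i < n \<and> Zr \<omega> i \<and> ennreal t \<le> Wr T1 T0 \<omega> i} = {i\<in>{i. i < n \<and> t \<le> T0 i}. stat t (\<omega> i) = 0}"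
    using W by (auto simp: stat_iff)
  have s2: "{i. i < n \<and> \<not> Zr \<omega> i \<and> ennreal t \<le> Wr T1 T0 \<omega> i} = {i\<in>{i. i < n \<and> t \<le> T0 i}. stat t (\<omega> i) = 1}"
    using W by (auto simp: stat_iff)
  have D: "Deltar T1 T0 \<omega> i \<and> Wr T1 T0 \<omega> i = ennreal t \<longleftrightarrow> T0 i = t \<and> ennreal t \<le> Cr \<omega> i" if "i < n" for i
  proof -
    have "Deltar T1 T0 \<omega> i \<longleftrightarrow> ennreal (T0 i) \<le> Cr \<omega> i" using that by (simp add: Deltar_def Tr)
    moreover have "ennreal (T0 i) \<le> Cr \<omega> i \<Longrightarrow> Wr T1 T0 \<omega> i = ennreal (T0 i)"
      using that by (simp add: Wr_def Tr min_def)
    moreover have "ennreal (T0 i) = ennreal t \<longleftrightarrow> T0 i = t" using T0 t that by (simp add: ennreal_inj)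
    ultimately show ?thesis by auto
  qed
  have s3: "{i. i < n \<and> Deltar T1 T0 \<omega> i \<and> Wr T1 T0 \<omega> i = ennreal t} = {i\<in>{i. i < n \<and> T0 i = t}. stat t (\<omega> i) \<noteq> 2}"
    using D by (auto simp: stat_iff)
  show ?thesis unfolding Vk_def Vf_def N1_def N0_def Dk_def s1 s2 s3 ..
qed

lemma aux4: "(2::real) / (a1 * a2) * (2 / b * X) = 4 / (b * a1 * a2) * X"
  by (cases "a1 = 0"; cases "a2 = 0"; cases "b = 0") (simp_all add: field_simps)

theorem lemmaA14:
  fixes n :: nat and p1 :: real and \<mu> :: "(ennreal \<times> ennreal) measure"
    and T1 T0 :: "nat \<Rightarrow> real" and t :: real
  assumes "0 < p1" and "p1 < 1"
    and "prob_space \<mu>" and "sets \<mu> = sets borel"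
    and "\<forall>i<n. 0 \<le> T0 i" and "\<forall>i<n. 0 \<le> T1 i"
    and H0: "\<forall>i<n. T1 i = T0 i"
    and "t \<in> T0 ` {..<n}"
  shows "(\<integral>\<omega>. (if Vk n T1 T0 t \<omega> > 0 then 1 / Vk n T1 T0 t \<omega> else 0) \<partial>sample_space n p1 \<mu>)
     \<le> 16 / (Gmix p1 \<mu> t * phik p1 \<mu> t * (1 - phik p1 \<mu> t))
        * ((1 + 2 / real (nk n T0 t))
           / ((hk n T0 t + 1 / real (nk n T0 t)) * (1 - hk n T0 t + 1 / real (nk n T0 t))))
        * (1 / real (nk n T0 t))"
proof -
  interpret unitsetup p1 \<mu> t by (intro unitsetup.intro assms(1-4))
  obtain j where j: "j < n" "t = T0 j" using assms(8) by auto
  have t0: "0 \<le> t" using j assms(5) by auto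
  define I where "I = {..<n}"
  define A where "A = {i. i < n \<and> T0 i = t}"
  define K where "K = {i. i < n \<and> t \<le> T0 i}"
  have fI: "finite I" "I \<noteq> {}" using j by (auto simp: I_def)
  have AK: "A \<subseteq> K" "K \<subseteq> I" by (auto simp: A_def K_def I_def)
  have fK: "finite K" "finite A" by (auto simp: A_def K_def)
  have jA: "j \<in> A" using j by (simp add: A_def)
  have cA: "card A \<ge> 1" using jA fK by (metis One_nat_def Suc_leI card_gt_0_iff empty_iff)
  have cKA: "card K \<ge> card A" using AK fK by (intro card_mono) auto
  define q where "q = qpmf gg ph"
  define E where "E = measure_pmf.expectation (Pi_pmf I 2 (\<lambda>_. q)) (Fv A K)"
  have LHS: "(\<integral>\<omega>. (if Vk n T1 T0 t \<omega> > 0 then 1 / Vk n T1 T0 t \<omega> else 0) \<partial>sample_space n p1 \<mu>) = E"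
  proof -
    have eq: "(\<lambda>\<omega>. if Vk n T1 T0 t \<omega> > 0 then 1 / Vk n T1 T0 t \<omega> else 0) = (\<lambda>\<omega>. Fv A K (\<lambda>i. stat t (\<omega> i)))"
      unfolding Vk_eq[OF assms(5) H0 t0] by (simp add: Fv_def A_def K_def)
    have tr: "(\<integral>\<omega>. Fv A K (\<lambda>i. stat t (\<omega> i)) \<partial>PiM I (\<lambda>_. unit_space p1 \<mu>))
        = measure_pmf.expectation (Pi_pmf I 2 (\<lambda>_. qpmf gg ph)) (Fv A K)"
    proof (rule transfer[OF fI])
      fix x y :: "nat \<Rightarrow> nat" assume "\<And>i. i \<in> I \<Longrightarrow> x i = y i"
      then show "Fv A K x = Fv A K y" by (rule Fv_dep[OF order_trans[OF AK] AK(2)])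
    qed
    show ?thesis unfolding sample_space_def E_def q_def eq I_def[symmetric] by (rule tr)
  qed
  have setq: "set_pmf q \<subseteq> {0, 1, 2}"
    unfolding q_def by (auto simp: set_pmf_eq pmf_q split: if_splits)
  have finPi: "finite (set_pmf (Pi_pmf I 2 (\<lambda>_. q)))"
    using setq fI by (intro finite_subset[OF set_Pi_pmf_subset'] finite_PiE_dflt) (auto intro: finite_subset)
  have intE: "integrable (Pi_pmf I 2 (\<lambda>_. q)) (Fv A K)" by (rule integrable_measure_pmf_finite[OF finPi])
  define d where "d = real (card A)"
  define m where "m = real (card (K - A))"
  have dm: "real (card K) = d + m" "0 \<le> d" "0 \<le> m" "0 < d + m"
    using cA cKA AK fK by (auto simp: d_def m_def card_Diff_subset of_nat_diff)
  have nk: "real (nk n T0 t) = d + m" using dm by (simp add: nk_def K_def)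
  have hk: "hk n T0 t = d / (d + m)" using dm by (simp add: hk_def dk_def nk_def A_def K_def d_def)
  define X where "X = 1 / (d + 1) + 1 / (m + 1)"
  have X0: "X \<ge> 0" using dm by (simp add: X_def)
  have RHS: "16 / (gg * ph * (1 - ph))
        * ((1 + 2 / real (nk n T0 t))
           / ((hk n T0 t + 1 / real (nk n T0 t)) * (1 - hk n T0 t + 1 / real (nk n T0 t))))
        * (1 / real (nk n T0 t)) = 16 / (gg * ph * (1 - ph)) * X"
  proof -
    have Y: "(1 + 2 / real (nk n T0 t))
           / ((hk n T0 t + 1 / real (nk n T0 t)) * (1 - hk n T0 t + 1 / real (nk n T0 t)))
        * (1 / real (nk n T0 t)) = X"
      unfolding nk hk X_def by (rule alg_rhs[OF dm(2-4)])
    show ?thesis unfolding mult.assoc[of "16 / (gg * ph * (1 - ph))"] Y ..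
  qed
  show ?thesis
  proof (cases "gg * ph * (1 - ph) = 0")
    case True
    have q01: "pmf q 0 = gg * ph" "pmf q 1 = gg * (1 - ph)"
      unfolding q_def pmf_q using g_ph by simp_all
    have z: "pmf q 0 = 0 \<or> pmf q 1 = 0" using True unfolding q01 by auto
    have "E = 0"
      unfolding E_def
    proof (subst integral_measure_pmf[where A="{}"])
      fix x assume x: "x \<in> set_pmf (Pi_pmf I 2 (\<lambda>_. q))"
      have xi: "x i \<in> set_pmf q" if "i \<in> I" for i
        using set_Pi_pmf_subset'[OF fI(1), of 2 "\<lambda>_. q"] x that by (auto simp: PiE_dflt_def)
      have nz: "pmf q (x i) \<noteq> 0" if "i \<in> K" for i
        using xi[of i] that AK by (auto simp: set_pmf_eq)
      have "{i\<in>K. x i = 0} = {} \<or> {i\<in>K. x i = 1} = {}"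
        using z
      proof (elim disjE)
        assume "pmf q 0 = 0" then show ?thesis using nz by (metis (mono_tags, lifting) empty_Collect_eq)
      next
        assume "pmf q 1 = 0" then show ?thesis using nz by (metis (mono_tags, lifting) empty_Collect_eq)
      qed
      then have "card {i\<in>K. x i = 0} = 0 \<or> card {i\<in>K. x i = 1} = 0" by (metis card.empty)
      then have "Vf A K x = 0" unfolding Vf_def Let_def by (elim disjE) simp_all
      then show "Fv A K x \<noteq> 0 \<Longrightarrow> x \<in> {}" by (simp add: Fv_def)
    qed auto
    then show ?thesis unfolding LHS RHS True by simp
  next
    case False
    have gp: "0 < gg" "0 < ph" "ph < 1" using False g_ph by (auto simp: less_le)
    have "ennreal E = (\<integral>\<^sup>+x. ennreal (Fv A K x) \<partial>Pi_pmf I 2 (\<lambda>_. q))"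
      unfolding E_def by (rule nn_integral_eq_integral[symmetric, OF intE]) (simp add: Fv_nonneg)
    also have "\<dots> \<le> ennreal ((2/ph + 2/(1-ph)) * (2 / ((real (card A) + 1) * gg) + 2 / ((real (card (K - A)) + 1) * gg)))"
      unfolding q_def using core[OF fI(1) AK(2,1) gp(1) g_ph(2) gp(2,3)] .
    also have "(2/ph + 2/(1-ph)) * (2 / ((real (card A) + 1) * gg) + 2 / ((real (card (K - A)) + 1) * gg))
        = 4 / (gg * ph * (1 - ph)) * X"
    proof -
      have e1: "2/ph + 2/(1-ph) = 2 / (ph * (1 - ph))" using gp by (simp add: field_simps)
      have "2 / ((d + 1) * gg) = 2 / gg * (1 / (d + 1))" "2 / ((m + 1) * gg) = 2 / gg * (1 / (m + 1))"
        by (simp_all add: mult.commute)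
      then have e2: "2 / ((d + 1) * gg) + 2 / ((m + 1) * gg) = 2 / gg * X"
        unfolding X_def distrib_left by (simp only:)
      show ?thesis unfolding d_def[symmetric] m_def[symmetric] e1 e2 by (rule aux4)
    qed
    finally have "E \<le> 4 / (gg * ph * (1 - ph)) * X"
      using gp X0 by (subst (asm) ennreal_le_iff) auto
    also have "\<dots> \<le> 16 / (gg * ph * (1 - ph)) * X"
      using gp X0 by (intro mult_right_mono divide_right_mono) auto
    finally show ?thesis unfolding LHS RHS .
  qed
qed

end
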